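(* Let $\gamma=(\gamma_1,\gamma_2)\ge(0,0)$ and $\varkappa\ge0$ with $\gamma_2\ge\varkappa$. If $A\in\mathcal M_{\gamma,0}$ and $B\in\mathcal M_{\gamma,\varkappa}$, then the matrix products $AB$ and $BA$ (defined by $(AB)_a^b=\sum_{c\in\mathcal L}A_a^cB_c^b$) exist (the defining series converge absolutely), belong to $\mathcal M_{\gamma,\varkappa}$, and $$|AB|_{\gamma,\varkappa}\le|A|_{\gamma,0}|B|_{\gamma,\varkappa},\qquad |BA|_{\gamma,\varkappa}\le|A|_{\gamma,0}|B|_{\gamma,\varkappa}.$$
   Context: Let $d_*\ge1$ and let $\mathcal L\subset\mathbb Z^{d_*}$. For $a\in\mathbb Z^{d_*}$, $\langle a\rangle=\max(|a|,1)$, and $[a-b]=\min(|a-b|,|a+b|)$. For $\gamma=(\gamma_1,\gamma_2)$ and $\varkappa\ge0$ let $e_{\gamma,\varkappa}(a,b)=C\,e^{\gamma_1[a-b]}\max([a-b],1)^{\gamma_2}\min(\langle a\rangle,\langle b\rangle)^{\varkappa}$, where $C\ge1$ is a fixed constant, taken sufficiently large depending only on $\gamma_2$ and $\varkappa$ (standing assumption). For a matrix $A=(A_a^b)_{a,b\in\mathcal L}$ whose entries $A_a^b$ are complex $2\times2$ matrices, let $$|A|_{\gamma,\varkappa}=\max\Big\{\sup_a\sum_b\|A_a^b\|\,e_{\gamma,\varkappa}(a,b),\ \sup_b\sum_a\|A_a^b\|\,e_{\gamma,\varkappa}(a,b)\Big\},$$ $\|\cdot\|$ being the operator norm of $2\times2$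 matrices, and let $\mathcal M_{\gamma,\varkappa}$ be the space of such matrices with $|A|_{\gamma,\varkappa}<\infty$. *)

theory Defs
  imports "HOL-Analysis.Analysis"
begin

text \<open>Points of Z^d are represented as functions nat => int vanishing outside {..<d}.\<close>

type_synonym lpt = "nat \<Rightarrow> int"
type_synonym blk = "complex ^ 2 ^ 2"

definition Zd :: "nat \<Rightarrow> lpt set" where
  "Zd d = {a. \<forall>i\<ge>d. a i = 0}"

definition lnorm :: "nat \<Rightarrow> lpt \<Rightarrow> real" where
  "lnorm d a = sqrt (\<Sum>i<d. (real_of_int (a i))\<^sup>2)"

definition bracket :: "nat \<Rightarrow> lpt \<Rightarrow> real" where
  "bracket d a = max (lnorm d a) 1"

definition sqdist :: "nat \<Rightarrow> lpt \<Rightarrow> lpt \<Rightarrow> real" where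
  "sqdist d a b = min (lnorm d (\<lambda>i. a i - b i)) (lnorm d (\<lambda>i. a i + b i))"

definition wgt :: "real \<Rightarrow> nat \<Rightarrow> real \<Rightarrow> real \<Rightarrow> real \<Rightarrow> lpt \<Rightarrow> lpt \<Rightarrow> real" where
  "wgt C d g1 g2 k a b =
     C * exp (g1 * sqdist d a b) * (max (sqdist d a b) 1) powr g2
       * (min (bracket d a) (bracket d b)) powr k"

definition opn :: "blk \<Rightarrow> real" where
  "opn M = onorm (\<lambda>x. M *v x)"

definition mnorm :: "real \<Rightarrow> nat \<Rightarrow> lpt set \<Rightarrow> real \<Rightarrow> real \<Rightarrow> real
                     \<Rightarrow> (lpt \<Rightarrow> lpt \<Rightarrow> blk) \<Rightarrow> ennreal" where
  "mnorm C d L g1 g2 k A =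
     max (SUP a\<in>L. (\<Sum>\<^sub>\<infinity>b\<in>L. ennreal (opn (A a b) * wgt C d g1 g2 k a b)))
         (SUP b\<in>L. (\<Sum>\<^sub>\<infinity>a\<in>L. ennreal (opn (A a b) * wgt C d g1 g2 k a b)))"

definition mprod :: "lpt set \<Rightarrow> (lpt \<Rightarrow> lpt \<Rightarrow> blk) \<Rightarrow> (lpt \<Rightarrow> lpt \<Rightarrow> blk) \<Rightarrow> (lpt \<Rightarrow> lpt \<Rightarrow> blk)" where
  "mprod L A B = (\<lambda>a b. \<Sum>\<^sub>\<infinity>c\<in>L. A a c ** B c b)"

end

theory Submission
  imports Defs
begin


lemma lnorm_L2: "lnorm d x = L2_set (\<lambda>i. real_of_int (x i)) {..<d}"
  by (simp add: lnorm_def L2_set_def)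

lemma lnorm_nonneg: "lnorm d x \<ge> 0"
  by (simp add: lnorm_def sum_nonneg)

lemma lnorm_add_le:
  assumes "\<And>i. z i = x i + y i"
  shows "lnorm d z \<le> lnorm d x + lnorm d y"
proof -
  have "lnorm d z = L2_set (\<lambda>i. real_of_int (x i) + real_of_int (y i)) {..<d}"
    unfolding lnorm_L2 by (simp add: assms)
  also have "\<dots> \<le> lnorm d x + lnorm d y"
    unfolding lnorm_L2 by (rule L2_set_triangle_ineq)
  finally show ?thesis .
qed

lemma lnorm_uminus:
  assumes "\<And>i. z i = - x i"
  shows "lnorm d z = lnorm d x"
  unfolding lnorm_def by (simp add: assms)

lemma sqdist_nonneg: "sqdist d a b \<ge> 0"
  by (simp add: sqdist_def lnorm_nonneg)

lemma sqdist_sym: "sqdist d a b = sqdist d b a"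
proof -
  have "lnorm d (\<lambda>i. a i - b i) = lnorm d (\<lambda>i. b i - a i)"
    by (rule lnorm_uminus) simp
  moreover have "(\<lambda>i. a i + b i) = (\<lambda>i. b i + a i)" by (simp add: add.commute)
  ultimately show ?thesis by (simp add: sqdist_def)
qed

lemma sqdist_tri: "sqdist d a b \<le> sqdist d a c + sqdist d c b"
proof -
  have 1: "lnorm d (\<lambda>i. a i - b i) \<le> lnorm d (\<lambda>i. a i - c i) + lnorm d (\<lambda>i. c i - b i)"
    by (rule lnorm_add_le) simp
  have 2: "lnorm d (\<lambda>i. a i - b i) \<le> lnorm d (\<lambda>i. a i + c i) + lnorm d (\<lambda>i. c i + b i)"
  proof -
    have "lnorm d (\<lambda>i. a i - b i) \<le> lnorm d (\<lambda>i. a i + c i) + lnorm d (\<lambda>i. - (c i + b i))"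
      by (rule lnorm_add_le) simp
    moreover have "lnorm d (\<lambda>i. - (c i + b i)) = lnorm d (\<lambda>i. c i + b i)"
      by (rule lnorm_uminus) simp
    ultimately show ?thesis by simp
  qed
  have 3: "lnorm d (\<lambda>i. a i + b i) \<le> lnorm d (\<lambda>i. a i - c i) + lnorm d (\<lambda>i. c i + b i)"
    by (rule lnorm_add_le) simp
  have 4: "lnorm d (\<lambda>i. a i + b i) \<le> lnorm d (\<lambda>i. a i + c i) + lnorm d (\<lambda>i. c i - b i)"
  proof -
    have "lnorm d (\<lambda>i. a i + b i) \<le> lnorm d (\<lambda>i. a i + c i) + lnorm d (\<lambda>i. - (c i - b i))"
      by (rule lnorm_add_le) simp
    moreover have "lnorm d (\<lambda>i. - (c i - b i)) = lnorm d (\<lambda>i. c i - b i)"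
      by (rule lnorm_uminus) simp
    ultimately show ?thesis by simp
  qed
  show ?thesis unfolding sqdist_def using 1 2 3 4 by linarith
qed

lemma lnorm_le_sqdist1: "lnorm d a \<le> lnorm d c + sqdist d a c"
proof -
  have 1: "lnorm d a \<le> lnorm d c + lnorm d (\<lambda>i. a i - c i)"
    by (rule lnorm_add_le) simp
  have "lnorm d a \<le> lnorm d (\<lambda>i. a i + c i) + lnorm d (\<lambda>i. - c i)"
    by (rule lnorm_add_le) simp
  moreover have "lnorm d (\<lambda>i. - c i) = lnorm d c" by (rule lnorm_uminus) simp
  ultimately have 2: "lnorm d a \<le> lnorm d c + lnorm d (\<lambda>i. a i + c i)" by simp
  show ?thesis unfolding sqdist_def using 1 2 by linarith
qed

lemma lnorm_le_sqdist2: "lnorm d b \<le> lnorm d c + sqdist d c b"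
  using lnorm_le_sqdist1[of d b c] sqdist_sym[of d b c] by simp

lemma bracket_ge1: "bracket d a \<ge> 1" by (simp add: bracket_def)

lemma wgt_sym: "wgt C d g1 g2 k a b = wgt C d g1 g2 k b a"
  unfolding wgt_def using sqdist_sym[of d a b] by (simp add: min.commute)

lemma uv_le: "(u::real) \<ge> 1 \<Longrightarrow> v \<ge> 1 \<Longrightarrow> u + v \<le> 2 * u * v"
proof -
  assume "u \<ge> 1" "v \<ge> 1"
  then have "0 \<le> (u - 1) * (v - 1)" by simp
  then show ?thesis using \<open>u\<ge>1\<close> \<open>v\<ge>1\<close> by (simp add: algebra_simps)
qed

lemma min_bracket_le:
  "min (bracket d a) (bracket d b) \<le>
     2 * min (bracket d c) (bracket d b) * min (max (sqdist d a c) 1) (max (sqdist d c b) 1)"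
  (is "?m \<le> 2 * ?m' * ?n")
proof (cases "bracket d c \<le> bracket d b")
  case True
  have "bracket d a \<le> bracket d c + max (sqdist d a c) 1"
    using lnorm_le_sqdist1[of d a c] bracket_ge1[of d c] unfolding bracket_def by linarith
  moreover have "bracket d b \<le> bracket d c + max (sqdist d c b) 1"
    using lnorm_le_sqdist2[of d b c] bracket_ge1[of d c] unfolding bracket_def by linarith
  ultimately have "?m \<le> bracket d c + ?n" by linarith
  also have "\<dots> \<le> 2 * bracket d c * ?n" by (rule uv_le) (auto simp: bracket_ge1)
  finally show ?thesis using True by simp
next
  case False
  have "?m \<le> bracket d b" by simp
  also have "\<dots> \<le> bracket d b + ?n" by (simp add: max_def)
  also have "\<dots> \<le> 2 * bracket d b * ?n" by (rule uv_le) (auto simp: bracket_ge1)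
  finally show ?thesis using False by simp
qed

lemma wgt_mult:
  assumes C: "C \<ge> 2 powr (g2 + k)" and g1: "g1 \<ge> 0" and g2: "g2 \<ge> 0" and k: "k \<ge> 0" "k \<le> g2"
  shows "wgt C d g1 g2 k a b \<le> wgt C d g1 g2 0 a c * wgt C d g1 g2 k c b"
proof -
  define X where "X = max (sqdist d a c) 1"
  define Y where "Y = max (sqdist d c b) 1"
  define Z where "Z = max (sqdist d a b) 1"
  define m where "m = min (bracket d a) (bracket d b)"
  define m' where "m' = min (bracket d c) (bracket d b)"
  have X1: "X \<ge> 1" and Y1: "Y \<ge> 1" and Z1: "Z \<ge> 1" by (auto simp: X_def Y_def Z_def)
  have m1: "m \<ge> 1" and m'1: "m' \<ge> 1" by (auto simp: m_def m'_def bracket_ge1)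
  have Cpos: "C > 0" using C by (smt (verit) powr_gt_zero)
  have ZXY: "Z \<le> 2 * max X Y"
    using sqdist_tri[of d a b c] unfolding X_def Y_def Z_def by linarith
  have mm: "m \<le> 2 * m' * min X Y" unfolding m_def m'_def X_def Y_def by (rule min_bracket_le)
  have E: "exp (g1 * sqdist d a b) \<le> exp (g1 * sqdist d a c) * exp (g1 * sqdist d c b)"
  proof -
    have "g1 * sqdist d a b \<le> g1 * sqdist d a c + g1 * sqdist d c b"
      using mult_left_mono[OF sqdist_tri[of d a b c] g1] by (simp add: algebra_simps)
    then show ?thesis by (simp add: exp_add[symmetric])
  qed
  have P1: "Z powr g2 \<le> 2 powr g2 * max X Y powr g2"
  proof -
    have "Z powr g2 \<le> (2 * max X Y) powr g2" using ZXY Z1 g2 by (intro powr_mono2) auto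
    also have "\<dots> = 2 powr g2 * max X Y powr g2" using X1 by (simp add: powr_mult)
    finally show ?thesis .
  qed
  have P2: "m powr k \<le> 2 powr k * m' powr k * min X Y powr g2"
  proof -
    have "m powr k \<le> (2 * m' * min X Y) powr k" using mm m1 k by (intro powr_mono2) auto
    also have "\<dots> = 2 powr k * m' powr k * min X Y powr k" using X1 Y1 m'1 by (simp add: powr_mult)
    also have "\<dots> \<le> 2 powr k * m' powr k * min X Y powr g2"
      using X1 Y1 k by (intro mult_left_mono powr_mono) auto
    finally show ?thesis .
  qed
  have MM: "max X Y powr g2 * min X Y powr g2 = X powr g2 * Y powr g2"
    by (cases "X \<le> Y") (auto simp: max_def min_def)
  have "Z powr g2 * m powr k \<le> (2 powr g2 * max X Y powr g2) * (2 powr k * m' powr k * min X Y powr g2)"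
    using P1 P2 by (intro mult_mono) auto
  also have "\<dots> = 2 powr (g2 + k) * (X powr g2 * Y powr g2 * m' powr k)"
    using MM by (simp add: powr_add algebra_simps)
  also have "\<dots> \<le> C * (X powr g2 * Y powr g2 * m' powr k)"
    using C by (intro mult_right_mono) auto
  finally have PM: "Z powr g2 * m powr k \<le> C * (X powr g2 * Y powr g2 * m' powr k)" .
  have "wgt C d g1 g2 k a b = C * exp (g1 * sqdist d a b) * (Z powr g2 * m powr k)"
    unfolding wgt_def Z_def m_def by (simp add: algebra_simps)
  also have "\<dots> \<le> C * (exp (g1 * sqdist d a c) * exp (g1 * sqdist d c b)) * (C * (X powr g2 * Y powr g2 * m' powr k))"
    by (rule mult_mono[OF mult_left_mono[OF E] PM]) (use Cpos in auto)
  also have "\<dots> = wgt C d g1 g2 0 a c * wgt C d g1 g2 k c b"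
    unfolding wgt_def X_def Y_def m'_def using bracket_ge1[of d a] bracket_ge1[of d c]
    by (simp add: algebra_simps)
  finally show ?thesis .
qed

lemma wgt_mult':
  assumes C: "C \<ge> 2 powr (g2 + k)" and g1: "g1 \<ge> 0" and g2: "g2 \<ge> 0" and k: "k \<ge> 0" "k \<le> g2"
  shows "wgt C d g1 g2 k a b \<le> wgt C d g1 g2 k a c * wgt C d g1 g2 0 c b"
  using wgt_mult[OF assms, of d b a c] wgt_sym[of C d g1 g2 k a b] wgt_sym[of C d g1 g2 0 b c]
    wgt_sym[of C d g1 g2 k c a] by (simp add: mult.commute)

lemma wgt_ge1:
  assumes "C \<ge> 1" "g1 \<ge> 0" "g2 \<ge> 0" "k \<ge> 0"
  shows "wgt C d g1 g2 k a b \<ge> 1"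
proof -
  have "1 \<le> exp (g1 * sqdist d a b)" using assms sqdist_nonneg[of d a b] by simp
  moreover have "1 \<le> max (sqdist d a b) 1 powr g2" using assms by (simp add: ge_one_powr_ge_zero)
  moreover have "1 \<le> min (bracket d a) (bracket d b) powr k"
    using assms bracket_ge1[of d a] bracket_ge1[of d b] by (simp add: ge_one_powr_ge_zero)
  ultimately have "1 * 1 * 1 * 1 \<le> C * exp (g1 * sqdist d a b) * max (sqdist d a b) 1 powr g2 * min (bracket d a) (bracket d b) powr k"
    using assms by (intro mult_mono) auto
  then show ?thesis by (simp add: wgt_def)
qed



lemma opn_nonneg: "opn M \<ge> 0"
  unfolding opn_def by (rule onorm_pos_le) simp

lemma opn_apply: "norm (M *v x) \<le> opn M * norm x"
  unfolding opn_def by (rule onorm) simp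

lemma opn_mult: "opn (M ** N) \<le> opn M * opn N"
proof -
  have "(\<lambda>x. (M ** N) *v x) = (\<lambda>x. M *v x) \<circ> (\<lambda>x. N *v x)"
    by (simp add: o_def matrix_vector_mul_assoc)
  then show ?thesis unfolding opn_def by (simp add: onorm_compose)
qed

lemma entry_le_opn: "norm ((M::blk) $ i $ j) \<le> opn M"
proof -
  have "M $ i $ j = (M *v axis j 1) $ i"
    by (simp add: matrix_vector_mult_def axis_def if_distrib cong: if_cong)
  moreover have "norm ((M *v axis j 1) $ i) \<le> norm (M *v axis j 1)" by (rule Finite_Cartesian_Product.norm_nth_le)
  ultimately have "norm (M $ i $ j) \<le> norm (M *v axis j 1)" by simp
  also have "\<dots> \<le> opn M * norm (axis j (1::complex))" by (rule opn_apply)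
  finally show ?thesis by simp
qed

lemma norm_le_opn: "norm (M::blk) \<le> 4 * opn M"
proof -
  have "norm M \<le> (\<Sum>i\<in>UNIV. norm (M $ i))"
    unfolding norm_vec_def by (rule L2_set_le_sum) simp
  also have "\<dots> \<le> (\<Sum>i\<in>(UNIV::2 set). \<Sum>j\<in>(UNIV::2 set). norm (M $ i $ j))"
  proof (rule sum_mono)
    fix i show "norm (M $ i) \<le> (\<Sum>j\<in>UNIV. norm (M $ i $ j))"
      unfolding norm_vec_def by (rule L2_set_le_sum) simp
  qed
  also have "\<dots> \<le> (\<Sum>i\<in>(UNIV::2 set). \<Sum>j\<in>(UNIV::2 set). opn M)"
    by (intro sum_mono entry_le_opn)
  also have "\<dots> = 4 * opn M" by simp
  finally show ?thesis .
qed

lemma linear_mv: "bounded_linear (\<lambda>M::blk. M *v x)"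
proof -
  have "linear (\<lambda>M::blk. M *v x)"
    by (rule linearI) (simp_all add: matrix_vector_mult_def vec_eq_iff sum.distrib
          scaleR_sum_right algebra_simps)
  then show ?thesis by (simp add: linear_conv_bounded_linear)
qed

lemma infsum_opn:
  assumes S: "(\<lambda>c. opn (M c) * opn (N c)) summable_on L"
  shows "(\<lambda>c. norm (M c ** N c)) summable_on L"
    and "(\<lambda>c. M c ** N c) summable_on L"
    and "opn (\<Sum>\<^sub>\<infinity>c\<in>L. M c ** N c) \<le> (\<Sum>\<^sub>\<infinity>c\<in>L. opn (M c) * opn (N c))"
proof -
  have S4: "(\<lambda>c. 4 * (opn (M c) * opn (N c))) summable_on L"
    using summable_on_cmult_right[OF S] .
  show N: "(\<lambda>c. norm (M c ** N c)) summable_on L"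
  proof (rule summable_on_comparison_test[OF S4])
    fix c
    have "norm (M c ** N c) \<le> 4 * opn (M c ** N c)" by (rule norm_le_opn)
    also have "\<dots> \<le> 4 * (opn (M c) * opn (N c))" using opn_mult by simp
    finally show "norm (M c ** N c) \<le> 4 * (opn (M c) * opn (N c))" .
  qed simp
  show SS: "(\<lambda>c. M c ** N c) summable_on L"
    by (rule abs_summable_summable) (use N in simp)
  let ?S = "\<Sum>\<^sub>\<infinity>c\<in>L. M c ** N c"
  let ?T = "\<Sum>\<^sub>\<infinity>c\<in>L. opn (M c) * opn (N c)"
  have "onorm (\<lambda>x. ?S *v x) \<le> ?T"
  proof (rule onorm_le)
    fix x :: "complex ^ 2"
    have h1: "((\<lambda>c. (M c ** N c) *v x) has_sum (?S *v x)) L"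
      using has_sum_bounded_linear[OF linear_mv has_sum_infsum[OF SS]] .
    have h2: "((\<lambda>c. opn (M c) * opn (N c) * norm x) has_sum (?T * norm x)) L"
      using has_sum_cmult_left[OF has_sum_infsum[OF S]] .
    show "norm (?S *v x) \<le> ?T * norm x"
    proof (rule norm_infsum_le[OF h1 h2])
      fix c
      have "norm ((M c ** N c) *v x) \<le> opn (M c ** N c) * norm x" by (rule opn_apply)
      also have "\<dots> \<le> opn (M c) * opn (N c) * norm x"
        using opn_mult by (intro mult_right_mono) auto
      finally show "norm ((M c ** N c) *v x) \<le> opn (M c) * opn (N c) * norm x" .
    qed
  qed
  then show "opn ?S \<le> ?T" by (simp add: opn_def)
qed



lemma sum_infsum_swap:
  fixes g :: "'a \<Rightarrow> 'b \<Rightarrow> real"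
  assumes "finite F" "\<And>b. b \<in> F \<Longrightarrow> (\<lambda>c. g c b) summable_on L"
  shows "(\<lambda>c. \<Sum>b\<in>F. g c b) summable_on L \<and> (\<Sum>b\<in>F. \<Sum>\<^sub>\<infinity>c\<in>L. g c b) = (\<Sum>\<^sub>\<infinity>c\<in>L. \<Sum>b\<in>F. g c b)"
  using assms
proof (induction F rule: finite_induct)
  case empty then show ?case by simp
next
  case (insert x F)
  then have IH: "(\<lambda>c. \<Sum>b\<in>F. g c b) summable_on L"
     "(\<Sum>b\<in>F. \<Sum>\<^sub>\<infinity>c\<in>L. g c b) = (\<Sum>\<^sub>\<infinity>c\<in>L. \<Sum>b\<in>F. g c b)" by auto
  have gx: "(\<lambda>c. g c x) summable_on L" using insert by auto
  show ?case using insert.hyps IH gx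
    by (simp add: summable_on_add infsum_add)
qed

lemma key_bound:
  fixes P Q :: "'a \<Rightarrow> 'a \<Rightarrow> real"
  assumes Pn: "\<And>a c. a \<in> L \<Longrightarrow> c \<in> L \<Longrightarrow> P a c \<ge> 0"
    and Qn: "\<And>a c. a \<in> L \<Longrightarrow> c \<in> L \<Longrightarrow> Q a c \<ge> 0"
    and rP: "\<And>a. a \<in> L \<Longrightarrow> (\<lambda>c. P a c) summable_on L \<and> (\<Sum>\<^sub>\<infinity>c\<in>L. P a c) \<le> MP"
    and cP: "\<And>c. c \<in> L \<Longrightarrow> (\<lambda>a. P a c) summable_on L \<and> (\<Sum>\<^sub>\<infinity>a\<in>L. P a c) \<le> MP"
    and rQ: "\<And>a. a \<in> L \<Longrightarrow> (\<lambda>c. Q a c) summable_on L \<and> (\<Sum>\<^sub>\<infinity>c\<in>L. Q a c) \<le> MQ"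
    and cQ: "\<And>c. c \<in> L \<Longrightarrow> (\<lambda>a. Q a c) summable_on L \<and> (\<Sum>\<^sub>\<infinity>a\<in>L. Q a c) \<le> MQ"
  shows key_summ: "\<And>a b. a \<in> L \<Longrightarrow> b \<in> L \<Longrightarrow> (\<lambda>c. P a c * Q c b) summable_on L"
    and key_row: "\<And>a F. a \<in> L \<Longrightarrow> finite F \<Longrightarrow> F \<subseteq> L \<Longrightarrow> (\<Sum>b\<in>F. \<Sum>\<^sub>\<infinity>c\<in>L. P a c * Q c b) \<le> MP * MQ"
    and key_col: "\<And>b F. b \<in> L \<Longrightarrow> finite F \<Longrightarrow> F \<subseteq> L \<Longrightarrow> (\<Sum>a\<in>F. \<Sum>\<^sub>\<infinity>c\<in>L. P a c * Q c b) \<le> MP * MQ"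
proof -
  have Qle: "Q c b \<le> MQ" if "c \<in> L" "b \<in> L" for c b
  proof -
    have "sum (\<lambda>a. Q a b) {c} \<le> (\<Sum>\<^sub>\<infinity>a\<in>L. Q a b)"
      by (rule finite_sum_le_infsum) (use cQ[OF that(2)] Qn that in auto)
    then show ?thesis using cQ[OF that(2)] by simp
  qed
  have MQ0: "MQ \<ge> 0" if "b \<in> L" for b using Qle[OF that that] Qn[OF that that] by simp
  have MP0: "MP \<ge> 0" if "b \<in> L" for b
  proof -
    have "0 \<le> (\<Sum>\<^sub>\<infinity>a\<in>L. P a b)" by (rule infsum_nonneg) (use Pn that in auto)
    then show ?thesis using cP[OF that] by simp
  qed
  show S: "(\<lambda>c. P a c * Q c b) summable_on L" if "a \<in> L" "b \<in> L" for a b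
  proof (rule summable_on_comparison_test)
    show "(\<lambda>c. P a c * MQ) summable_on L" using rP[OF that(1)] by (intro summable_on_cmult_left) auto
    fix c assume c: "c \<in> L"
    show "P a c * Q c b \<le> P a c * MQ" using Qle[OF c that(2)] Pn[OF that(1) c] by (intro mult_left_mono)
    show "0 \<le> P a c * Q c b" using Pn[OF that(1) c] Qn[OF c that(2)] by simp
  qed
  show "(\<Sum>b\<in>F. \<Sum>\<^sub>\<infinity>c\<in>L. P a c * Q c b) \<le> MP * MQ" if a: "a \<in> L" and F: "finite F" "F \<subseteq> L" for a F
  proof -
    have sw: "(\<lambda>c. \<Sum>b\<in>F. P a c * Q c b) summable_on L \<and>
        (\<Sum>b\<in>F. \<Sum>\<^sub>\<infinity>c\<in>L. P a c * Q c b) = (\<Sum>\<^sub>\<infinity>c\<in>L. \<Sum>b\<in>F. P a c * Q c b)"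
      by (rule sum_infsum_swap) (use F S a in auto)
    have "(\<Sum>\<^sub>\<infinity>c\<in>L. \<Sum>b\<in>F. P a c * Q c b) \<le> (\<Sum>\<^sub>\<infinity>c\<in>L. P a c * MQ)"
    proof (rule infsum_mono)
      show "(\<lambda>c. P a c * MQ) summable_on L" using rP[OF a] by (intro summable_on_cmult_left) auto
      show "(\<lambda>c. \<Sum>b\<in>F. P a c * Q c b) summable_on L" using sw by simp
      fix c assume c: "c \<in> L"
      have "(\<Sum>b\<in>F. Q c b) \<le> (\<Sum>\<^sub>\<infinity>b\<in>L. Q c b)"
        by (rule finite_sum_le_infsum) (use rQ[OF c] F Qn c in auto)
      also have "\<dots> \<le> MQ" using rQ[OF c] by simp
      finally have "P a c * (\<Sum>b\<in>F. Q c b) \<le> P a c * MQ" using Pn[OF a c] by (intro mult_left_mono)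
      then show "(\<Sum>b\<in>F. P a c * Q c b) \<le> P a c * MQ" by (simp add: sum_distrib_left)
    qed
    also have "\<dots> = (\<Sum>\<^sub>\<infinity>c\<in>L. P a c) * MQ" by (rule infsum_cmult_left') 
    also have "\<dots> \<le> MP * MQ" using rP[OF a] MQ0[OF a] by (intro mult_right_mono) auto
    finally show ?thesis using sw by simp
  qed
  show "(\<Sum>a\<in>F. \<Sum>\<^sub>\<infinity>c\<in>L. P a c * Q c b) \<le> MP * MQ" if b: "b \<in> L" and F: "finite F" "F \<subseteq> L" for b F
  proof -
    have sw: "(\<lambda>c. \<Sum>a\<in>F. P a c * Q c b) summable_on L \<and>
        (\<Sum>a\<in>F. \<Sum>\<^sub>\<infinity>c\<in>L. P a c * Q c b) = (\<Sum>\<^sub>\<infinity>c\<in>L. \<Sum>a\<in>F. P a c * Q c b)"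
      by (rule sum_infsum_swap) (use F S b in auto)
    have "(\<Sum>\<^sub>\<infinity>c\<in>L. \<Sum>a\<in>F. P a c * Q c b) \<le> (\<Sum>\<^sub>\<infinity>c\<in>L. Q c b * MP)"
    proof (rule infsum_mono)
      show "(\<lambda>c. Q c b * MP) summable_on L" using cQ[OF b] by (intro summable_on_cmult_left) auto
      show "(\<lambda>c. \<Sum>a\<in>F. P a c * Q c b) summable_on L" using sw by simp
      fix c assume c: "c \<in> L"
      have "(\<Sum>a\<in>F. P a c) \<le> (\<Sum>\<^sub>\<infinity>a\<in>L. P a c)"
        by (rule finite_sum_le_infsum) (use cP[OF c] F Pn c in auto)
      also have "\<dots> \<le> MP" using cP[OF c] by simp
      finally have "Q c b * (\<Sum>a\<in>F. P a c) \<le> Q c b * MP" using Qn[OF c b] by (intro mult_left_mono)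
      then show "(\<Sum>a\<in>F. P a c * Q c b) \<le> Q c b * MP" by (simp add: sum_distrib_left mult.commute)
    qed
    also have "\<dots> = (\<Sum>\<^sub>\<infinity>c\<in>L. Q c b) * MP" by (rule infsum_cmult_left') 
    also have "\<dots> \<le> MQ * MP" using cQ[OF b] MP0[OF b] by (intro mult_right_mono) auto
    finally show ?thesis using sw by (simp add: mult.commute)
  qed
qed

lemma enn_bound:
  fixes f :: "'a \<Rightarrow> real"
  assumes "\<And>x. x \<in> L \<Longrightarrow> f x \<ge> 0"
    and "\<And>F. finite F \<Longrightarrow> F \<subseteq> L \<Longrightarrow> sum f F \<le> K"
  shows "(\<Sum>\<^sub>\<infinity>x\<in>L. ennreal (f x)) \<le> ennreal K"
proof -
  have "(\<Sum>\<^sub>\<infinity>x\<in>L. ennreal (f x)) = (SUP F\<in>{F. finite F \<and> F\<subseteq>L}. sum (\<lambda>x. ennreal (f x)) F)"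
    by (rule nonneg_infsum_complete) simp
  also have "\<dots> \<le> ennreal K"
  proof (rule SUP_least)
    fix F assume F: "F \<in> {F. finite F \<and> F\<subseteq>L}"
    have "sum (\<lambda>x. ennreal (f x)) F = ennreal (sum f F)"
      using F assms(1) by (intro sum_ennreal) auto
    also have "\<dots> \<le> ennreal K" using assms(2) F by (intro ennreal_leI) auto
    finally show "sum (\<lambda>x. ennreal (f x)) F \<le> ennreal K" .
  qed
  finally show ?thesis .
qed

lemma enn_fin:
  fixes f :: "'a \<Rightarrow> real"
  assumes f0: "\<And>x. x \<in> L \<Longrightarrow> f x \<ge> 0" and K: "K \<ge> 0"
    and le: "(\<Sum>\<^sub>\<infinity>x\<in>L. ennreal (f x)) \<le> ennreal K"
  shows "f summable_on L \<and> infsum f L \<le> K"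
proof -
  have fin: "sum f F \<le> K" if F: "finite F" "F \<subseteq> L" for F
  proof -
    have "ennreal (sum f F) = sum (\<lambda>x. ennreal (f x)) F"
      using F f0 by (intro sum_ennreal[symmetric]) auto
    also have "\<dots> \<le> (SUP F\<in>{F. finite F \<and> F\<subseteq>L}. sum (\<lambda>x. ennreal (f x)) F)"
      using F by (intro SUP_upper) auto
    also have "\<dots> = (\<Sum>\<^sub>\<infinity>x\<in>L. ennreal (f x))"
      by (rule nonneg_infsum_complete[symmetric]) simp
    also have "\<dots> \<le> ennreal K" by (rule le)
    finally show ?thesis using K by (simp add: ennreal_le_iff)
  qed
  have bdd: "bdd_above (sum f ` {F. F\<subseteq>L \<and> finite F})"
    using fin by (auto intro!: bdd_aboveI)
  have S: "f summable_on L" by (rule nonneg_bdd_above_summable_on[OF _ bdd]) (use f0 in auto)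
  have "infsum f L = (SUP F\<in>{F. finite F \<and> F\<subseteq>L}. sum f F)"
    by (rule nonneg_bdd_above_infsum[OF _ bdd]) (use f0 in auto)
  also have "\<dots> \<le> K" by (rule cSUP_least) (use fin in auto)
  finally show ?thesis using S by simp
qed

lemma entry_bound:
  assumes S1: "(\<lambda>c. opn (M c) * opn (N c)) summable_on L"
    and S2: "(\<lambda>c. p c * q c) summable_on L"
    and le: "\<And>c. c \<in> L \<Longrightarrow> opn (M c) * opn (N c) * w \<le> p c * q c"
    and w: "w \<ge> 0"
  shows "opn (\<Sum>\<^sub>\<infinity>c\<in>L. M c ** N c) * w \<le> (\<Sum>\<^sub>\<infinity>c\<in>L. p c * q c)"
proof -
  have "opn (\<Sum>\<^sub>\<infinity>c\<in>L. M c ** N c) * w \<le> (\<Sum>\<^sub>\<infinity>c\<in>L. opn (M c) * opn (N c)) * w"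
    using infsum_opn(3)[OF S1] w by (rule mult_right_mono)
  also have "\<dots> = (\<Sum>\<^sub>\<infinity>c\<in>L. opn (M c) * opn (N c) * w)" by (rule infsum_cmult_left'[symmetric])
  also have "\<dots> \<le> (\<Sum>\<^sub>\<infinity>c\<in>L. p c * q c)"
    by (rule infsum_mono) (use S2 S1 le in \<open>auto intro: summable_on_cmult_left\<close>)
  finally show ?thesis .
qed



lemma main_fixed:
  fixes A B :: "lpt \<Rightarrow> lpt \<Rightarrow> blk"
  assumes g2: "g2 \<ge> 0" and k: "k \<ge> 0" "g2 \<ge> k" and C1: "C \<ge> 1" and C2: "C \<ge> 2 powr (g2 + k)"
    and g1: "g1 \<ge> 0"
    and fA: "mnorm C d L g1 g2 0 A < (\<infinity>::ennreal)" and fB: "mnorm C d L g1 g2 k B < (\<infinity>::ennreal)"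
  shows "(\<forall>a\<in>L. \<forall>b\<in>L. (\<lambda>c. norm (A a c ** B c b)) summable_on L \<and>
                       (\<lambda>c. norm (B a c ** A c b)) summable_on L) \<and>
       mnorm C d L g1 g2 k (mprod L A B) < (\<infinity>::ennreal) \<and>
       mnorm C d L g1 g2 k (mprod L B A) < (\<infinity>::ennreal) \<and>
       mnorm C d L g1 g2 k (mprod L A B) \<le> mnorm C d L g1 g2 0 A * mnorm C d L g1 g2 k B \<and>
       mnorm C d L g1 g2 k (mprod L B A) \<le> mnorm C d L g1 g2 0 A * mnorm C d L g1 g2 k B"
proof -
  define NA where "NA = mnorm C d L g1 g2 0 A"
  define NB where "NB = mnorm C d L g1 g2 k B"
  define MA where "MA = enn2real NA"
  define MB where "MB = enn2real NB"
  define w0 where "w0 = wgt C d g1 g2 0"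
  define wk where "wk = wgt C d g1 g2 k"
  have NA: "NA = ennreal MA" using fA unfolding MA_def NA_def by simp
  have NB: "NB = ennreal MB" using fB unfolding MB_def NB_def by simp
  have MA0: "MA \<ge> 0" and MB0: "MB \<ge> 0" by (simp_all add: MA_def MB_def)
  have w01: "w0 a b \<ge> 1" for a b unfolding w0_def by (rule wgt_ge1) (use C1 g1 g2 in auto)
  have wk1: "wk a b \<ge> 1" for a b unfolding wk_def by (rule wgt_ge1) (use C1 g1 g2 k in auto)
  have wm: "wk a b \<le> w0 a c * wk c b" for a b c
    unfolding wk_def w0_def by (rule wgt_mult) (use C2 g1 g2 k in auto)
  have wm': "wk a b \<le> wk a c * w0 c b" for a b c
    unfolding wk_def w0_def by (rule wgt_mult') (use C2 g1 g2 k in auto)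
  define P where "P a c = opn (A a c) * w0 a c" for a c
  define Q where "Q a c = opn (B a c) * wk a c" for a c
  have Pn: "P a c \<ge> 0" for a c unfolding P_def using w01[of a c] opn_nonneg[of "A a c"] by simp
  have Qn: "Q a c \<ge> 0" for a c unfolding Q_def using wk1[of a c] opn_nonneg[of "B a c"] by simp
  have rP: "(\<lambda>c. P a c) summable_on L \<and> (\<Sum>\<^sub>\<infinity>c\<in>L. P a c) \<le> MA" if "a \<in> L" for a
  proof (rule enn_fin[OF Pn MA0])
    have "(\<Sum>\<^sub>\<infinity>c\<in>L. ennreal (P a c)) \<le> NA"
      unfolding NA_def mnorm_def P_def w0_def using that by (intro max.coboundedI1 SUP_upper) auto
    then show "(\<Sum>\<^sub>\<infinity>c\<in>L. ennreal (P a c)) \<le> ennreal MA" using NA by simp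
  qed
  have cP: "(\<lambda>a. P a c) summable_on L \<and> (\<Sum>\<^sub>\<infinity>a\<in>L. P a c) \<le> MA" if "c \<in> L" for c
  proof (rule enn_fin[OF Pn MA0])
    have "(\<Sum>\<^sub>\<infinity>a\<in>L. ennreal (P a c)) \<le> NA"
      unfolding NA_def mnorm_def P_def w0_def using that by (intro max.coboundedI2 SUP_upper) auto
    then show "(\<Sum>\<^sub>\<infinity>a\<in>L. ennreal (P a c)) \<le> ennreal MA" using NA by simp
  qed
  have rQ: "(\<lambda>c. Q a c) summable_on L \<and> (\<Sum>\<^sub>\<infinity>c\<in>L. Q a c) \<le> MB" if "a \<in> L" for a
  proof (rule enn_fin[OF Qn MB0])
    have "(\<Sum>\<^sub>\<infinity>c\<in>L. ennreal (Q a c)) \<le> NB"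
      unfolding NB_def mnorm_def Q_def wk_def using that by (intro max.coboundedI1 SUP_upper) auto
    then show "(\<Sum>\<^sub>\<infinity>c\<in>L. ennreal (Q a c)) \<le> ennreal MB" using NB by simp
  qed
  have cQ: "(\<lambda>a. Q a c) summable_on L \<and> (\<Sum>\<^sub>\<infinity>a\<in>L. Q a c) \<le> MB" if "c \<in> L" for c
  proof (rule enn_fin[OF Qn MB0])
    have "(\<Sum>\<^sub>\<infinity>a\<in>L. ennreal (Q a c)) \<le> NB"
      unfolding NB_def mnorm_def Q_def wk_def using that by (intro max.coboundedI2 SUP_upper) auto
    then show "(\<Sum>\<^sub>\<infinity>a\<in>L. ennreal (Q a c)) \<le> ennreal MB" using NB by simp
  qed
  have K1: "\<And>a b. a \<in> L \<Longrightarrow> b \<in> L \<Longrightarrow> (\<lambda>c. P a c * Q c b) summable_on L"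
    "\<And>a F. a \<in> L \<Longrightarrow> finite F \<Longrightarrow> F \<subseteq> L \<Longrightarrow> (\<Sum>b\<in>F. \<Sum>\<^sub>\<infinity>c\<in>L. P a c * Q c b) \<le> MA * MB"
    "\<And>b F. b \<in> L \<Longrightarrow> finite F \<Longrightarrow> F \<subseteq> L \<Longrightarrow> (\<Sum>a\<in>F. \<Sum>\<^sub>\<infinity>c\<in>L. P a c * Q c b) \<le> MA * MB"
    by (rule key_bound[of L P Q MA MB]; (use Pn Qn rP cP rQ cQ in auto)?)+
  have K2: "\<And>a b. a \<in> L \<Longrightarrow> b \<in> L \<Longrightarrow> (\<lambda>c. Q a c * P c b) summable_on L"
    "\<And>a F. a \<in> L \<Longrightarrow> finite F \<Longrightarrow> F \<subseteq> L \<Longrightarrow> (\<Sum>b\<in>F. \<Sum>\<^sub>\<infinity>c\<in>L. Q a c * P c b) \<le> MB * MA"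
    "\<And>b F. b \<in> L \<Longrightarrow> finite F \<Longrightarrow> F \<subseteq> L \<Longrightarrow> (\<Sum>a\<in>F. \<Sum>\<^sub>\<infinity>c\<in>L. Q a c * P c b) \<le> MB * MA"
    by (rule key_bound[of L Q P MB MA]; (use Pn Qn rP cP rQ cQ in auto)?)+
  have oo: "opn M * opn N \<le> opn M * w * (opn N * w')" if "w \<ge> 1" "w' \<ge> 1" for M N w w'
  proof -
    have "opn M * 1 \<le> opn M * w" using that opn_nonneg[of M] by (intro mult_left_mono) auto
    moreover have "opn N * 1 \<le> opn N * w'" using that opn_nonneg[of N] by (intro mult_left_mono) auto
    ultimately show ?thesis using opn_nonneg[of M] opn_nonneg[of N] by (intro mult_mono) auto
  qed
  have SAB: "(\<lambda>c. opn (A a c) * opn (B c b)) summable_on L" if "a \<in> L" "b \<in> L" for a b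
  proof (rule summable_on_comparison_test[OF K1(1)[OF that]])
    fix c
    show "opn (A a c) * opn (B c b) \<le> P a c * Q c b" unfolding P_def Q_def by (rule oo) (auto simp: w01 wk1)
    show "0 \<le> opn (A a c) * opn (B c b)" using opn_nonneg by simp
  qed
  have SBA: "(\<lambda>c. opn (B a c) * opn (A c b)) summable_on L" if "a \<in> L" "b \<in> L" for a b
  proof (rule summable_on_comparison_test[OF K2(1)[OF that]])
    fix c
    show "opn (B a c) * opn (A c b) \<le> Q a c * P c b" unfolding P_def Q_def by (rule oo) (auto simp: w01 wk1)
    show "0 \<le> opn (B a c) * opn (A c b)" using opn_nonneg by simp
  qed
  have EAB: "opn (mprod L A B a b) * wk a b \<le> (\<Sum>\<^sub>\<infinity>c\<in>L. P a c * Q c b)" if "a \<in> L" "b \<in> L" for a b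
    unfolding mprod_def
  proof (rule entry_bound[OF SAB[OF that] K1(1)[OF that]])
    fix c
    have "opn (A a c) * opn (B c b) * wk a b \<le> opn (A a c) * opn (B c b) * (w0 a c * wk c b)"
      using wm[of a b c] opn_nonneg[of "A a c"] opn_nonneg[of "B c b"] by (intro mult_left_mono) auto
    then show "opn (A a c) * opn (B c b) * wk a b \<le> P a c * Q c b" by (simp add: P_def Q_def ac_simps)
  qed (use wk1[of a b] in auto)
  have EBA: "opn (mprod L B A a b) * wk a b \<le> (\<Sum>\<^sub>\<infinity>c\<in>L. Q a c * P c b)" if "a \<in> L" "b \<in> L" for a b
    unfolding mprod_def
  proof (rule entry_bound[OF SBA[OF that] K2(1)[OF that]])
    fix c
    have "opn (B a c) * opn (A c b) * wk a b \<le> opn (B a c) * opn (A c b) * (wk a c * w0 c b)"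
      using wm'[of a b c] opn_nonneg[of "B a c"] opn_nonneg[of "A c b"] by (intro mult_left_mono) auto
    then show "opn (B a c) * opn (A c b) * wk a b \<le> Q a c * P c b" by (simp add: P_def Q_def ac_simps)
  qed (use wk1[of a b] in auto)
  have nn: "0 \<le> opn M * wk a b" for M a b using opn_nonneg[of M] wk1[of a b] by simp
  have AB: "mnorm C d L g1 g2 k (mprod L A B) \<le> ennreal (MA * MB)"
    unfolding mnorm_def wk_def[symmetric]
  proof (intro max.boundedI SUP_least)
    fix a assume a: "a \<in> L"
    show "(\<Sum>\<^sub>\<infinity>b\<in>L. ennreal (opn (mprod L A B a b) * wk a b)) \<le> ennreal (MA * MB)"
    proof (rule enn_bound[OF nn])
      fix F assume F: "finite F" "F \<subseteq> L"
      have "(\<Sum>b\<in>F. opn (mprod L A B a b) * wk a b) \<le> (\<Sum>b\<in>F. \<Sum>\<^sub>\<infinity>c\<in>L. P a c * Q c b)"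
        using F a by (intro sum_mono EAB) auto
      also have "\<dots> \<le> MA * MB" by (rule K1(2)[OF a F])
      finally show "(\<Sum>b\<in>F. opn (mprod L A B a b) * wk a b) \<le> MA * MB" .
    qed
  next
    fix b assume b: "b \<in> L"
    show "(\<Sum>\<^sub>\<infinity>a\<in>L. ennreal (opn (mprod L A B a b) * wk a b)) \<le> ennreal (MA * MB)"
    proof (rule enn_bound[OF nn])
      fix F assume F: "finite F" "F \<subseteq> L"
      have "(\<Sum>a\<in>F. opn (mprod L A B a b) * wk a b) \<le> (\<Sum>a\<in>F. \<Sum>\<^sub>\<infinity>c\<in>L. P a c * Q c b)"
        using F b by (intro sum_mono EAB) auto
      also have "\<dots> \<le> MA * MB" by (rule K1(3)[OF b F])
      finally show "(\<Sum>a\<in>F. opn (mprod L A B a b) * wk a b) \<le> MA * MB" .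
    qed
  qed
  have BA: "mnorm C d L g1 g2 k (mprod L B A) \<le> ennreal (MA * MB)"
    unfolding mnorm_def wk_def[symmetric]
  proof (intro max.boundedI SUP_least)
    fix a assume a: "a \<in> L"
    show "(\<Sum>\<^sub>\<infinity>b\<in>L. ennreal (opn (mprod L B A a b) * wk a b)) \<le> ennreal (MA * MB)"
    proof (rule enn_bound[OF nn])
      fix F assume F: "finite F" "F \<subseteq> L"
      have "(\<Sum>b\<in>F. opn (mprod L B A a b) * wk a b) \<le> (\<Sum>b\<in>F. \<Sum>\<^sub>\<infinity>c\<in>L. Q a c * P c b)"
        using F a by (intro sum_mono EBA) auto
      also have "\<dots> \<le> MB * MA" by (rule K2(2)[OF a F])
      finally show "(\<Sum>b\<in>F. opn (mprod L B A a b) * wk a b) \<le> MA * MB" by (simp add: mult.commute)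
    qed
  next
    fix b assume b: "b \<in> L"
    show "(\<Sum>\<^sub>\<infinity>a\<in>L. ennreal (opn (mprod L B A a b) * wk a b)) \<le> ennreal (MA * MB)"
    proof (rule enn_bound[OF nn])
      fix F assume F: "finite F" "F \<subseteq> L"
      have "(\<Sum>a\<in>F. opn (mprod L B A a b) * wk a b) \<le> (\<Sum>a\<in>F. \<Sum>\<^sub>\<infinity>c\<in>L. Q a c * P c b)"
        using F b by (intro sum_mono EBA) auto
      also have "\<dots> \<le> MB * MA" by (rule K2(3)[OF b F])
      finally show "(\<Sum>a\<in>F. opn (mprod L B A a b) * wk a b) \<le> MA * MB" by (simp add: mult.commute)
    qed
  qed
  have prod: "ennreal (MA * MB) = NA * NB" using NA NB MA0 MB0 by (simp add: ennreal_mult)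
  have summ: "\<forall>a\<in>L. \<forall>b\<in>L. (\<lambda>c. norm (A a c ** B c b)) summable_on L \<and>
                       (\<lambda>c. norm (B a c ** A c b)) summable_on L"
    using infsum_opn(1)[OF SAB] infsum_opn(1)[OF SBA] by blast
  have f1: "mnorm C d L g1 g2 k (mprod L A B) < \<infinity>"
    using AB ennreal_less_top[of "MA * MB"] by (simp add: le_less_trans)
  have f2: "mnorm C d L g1 g2 k (mprod L B A) < \<infinity>"
    using BA ennreal_less_top[of "MA * MB"] by (simp add: le_less_trans)
  show ?thesis
    using summ AB BA prod f1 f2 unfolding NA_def NB_def by simp
qed


theorem proposition2p2:
  fixes g2 k :: real
  assumes "g2 \<ge> 0" and "k \<ge> 0" and "g2 \<ge> k"
  shows "\<exists>C0\<ge>1. \<forall>C\<ge>C0. \<forall>d::nat. \<forall>L::lpt set. \<forall>g1::real. \<forall>A::lpt \<Rightarrow> lpt \<Rightarrow> blk. \<forall>B::lpt \<Rightarrow> lpt \<Rightarrow> blk.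
     d \<ge> 1 \<longrightarrow> L \<subseteq> Zd d \<longrightarrow> g1 \<ge> 0 \<longrightarrow>
     mnorm C d L g1 g2 0 A < (\<infinity>::ennreal) \<longrightarrow> mnorm C d L g1 g2 k B < (\<infinity>::ennreal) \<longrightarrow>
       (\<forall>a\<in>L. \<forall>b\<in>L. (\<lambda>c. norm (A a c ** B c b)) summable_on L \<and>
                       (\<lambda>c. norm (B a c ** A c b)) summable_on L) \<and>
       mnorm C d L g1 g2 k (mprod L A B) < (\<infinity>::ennreal) \<and>
       mnorm C d L g1 g2 k (mprod L B A) < (\<infinity>::ennreal) \<and>
       mnorm C d L g1 g2 k (mprod L A B) \<le> mnorm C d L g1 g2 0 A * mnorm C d L g1 g2 k B \<and>
       mnorm C d L g1 g2 k (mprod L B A) \<le> mnorm C d L g1 g2 0 A * mnorm C d L g1 g2 k B"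
proof (intro exI[of _ "max 1 (2 powr (g2 + k))"] conjI allI impI)
  show "1 \<le> max 1 (2 powr (g2 + k))" by simp
next
  fix C d L g1 and A B :: "lpt \<Rightarrow> lpt \<Rightarrow> blk"
  assume C: "max 1 (2 powr (g2 + k)) \<le> C" and "g1 \<ge> 0"
    and "mnorm C d L g1 g2 0 A < \<infinity>" and "mnorm C d L g1 g2 k B < \<infinity>"
  note h = this
  have "C \<ge> 1" "C \<ge> 2 powr (g2 + k)" using C by auto
  note M = main_fixed[of g2 k C g1 d L A B, OF assms this h(2-4)]
  show "\<forall>a\<in>L. \<forall>b\<in>L. (\<lambda>c. norm (A a c ** B c b)) summable_on L \<and> (\<lambda>c. norm (B a c ** A c b)) summable_on L"
    using M by blast
  show "mnorm C d L g1 g2 k (mprod L A B) < \<infinity>" using M by blast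
  show "mnorm C d L g1 g2 k (mprod L B A) < \<infinity>" using M by blast
  show "mnorm C d L g1 g2 k (mprod L A B) \<le> mnorm C d L g1 g2 0 A * mnorm C d L g1 g2 k B" using M by blast
  show "mnorm C d L g1 g2 k (mprod L B A) \<le> mnorm C d L g1 g2 0 A * mnorm C d L g1 g2 k B" using M by blast
qed

end
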